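(* Let $f:\mathbb{Z}^+\to \{-1,1\}$ be a function such that $|f([n])|\leq \frac{n}{\omega (n)}$ for all $n$, where $\omega$ is a function with $\omega(n)\to \infty$ as $n \to \infty$. Then, for every even $k\geq 2$, there are infinitely many $k$-blocks $B\subseteq \mathbb{Z}^+$ with $f(B)=0$.
   Context: $[n]=\{1,\dots,n\}$; for a finite set $Y$, $f(Y)=\sum_{y\in Y}f(y)$; a $k$-block is a set of $k$ consecutive integers. *)

theory Defs
  imports "HOL-Analysis.Analysis"
begin

end

theory Submission
  imports Defs
begin

lemma parity_sum:
  fixes f :: "nat \<Rightarrow> int"
  assumes "\<And>x. x \<in> A \<Longrightarrow> odd (f x)" "finite A"
  shows "even (sum f A) = even (card A)"
  using assms(2,1)
proof (induction A rule: finite_induct)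
  case empty then show ?case by simp
next
  case (insert x F)
  have "odd (f x)" using insert by auto
  moreover have "even (sum f F) = even (card F)" using insert by auto
  ultimately show ?case using insert by auto
qed

lemma pos_case:
  fixes f :: "nat \<Rightarrow> int" and \<omega> :: "nat \<Rightarrow> real" and k N :: nat
  assumes omega_lim: "filterlim \<omega> at_top sequentially"
    and disc: "\<And>n. n \<ge> 1 \<Longrightarrow> \<bar>real_of_int (\<Sum>i\<in>{1..n}. f i)\<bar> \<le> real n / \<omega> n"
    and k1: "k \<ge> 1" and N1: "N \<ge> 1"
    and pos: "\<And>a. a \<ge> N \<Longrightarrow> (\<Sum>i\<in>{a..<a+k}. f i) \<ge> 1"
  shows False
proof -
  define S where "S n = (\<Sum>i\<in>{1..n}. f i)" for n
  have blk: "(\<Sum>i\<in>{N..<N+m*k}. f i) \<ge> int m" for m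
  proof (induction m)
    case 0 then show ?case by simp
  next
    case (Suc m)
    have "(\<Sum>i\<in>{N..<N+Suc m*k}. f i) = (\<Sum>i\<in>{N..<N+m*k}. f i) + (\<Sum>i\<in>{N+m*k..<N+m*k+k}. f i)"
      by (subst sum.atLeastLessThan_concat[symmetric, of N "N+m*k"]) (auto simp: algebra_simps)
    moreover have "(\<Sum>i\<in>{N+m*k..<N+m*k+k}. f i) \<ge> 1" using pos by auto
    ultimately show ?case using Suc by simp
  qed
  have Seq: "S (N-1+m*k) = S (N-1) + (\<Sum>i\<in>{N..<N+m*k}. f i)" for m
  proof -
    have "S (N-1+m*k) = (\<Sum>i\<in>{1..<N+m*k}. f i)" unfolding S_def
      using N1 by (intro sum.cong) auto
    also have "\<dots> = (\<Sum>i\<in>{1..<N}. f i) + (\<Sum>i\<in>{N..<N+m*k}. f i)"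
      using N1 by (intro sum.atLeastLessThan_concat[symmetric]) auto
    also have "(\<Sum>i\<in>{1..<N}. f i) = S (N-1)" unfolding S_def
      using N1 by (intro sum.cong) auto
    finally show ?thesis .
  qed
  from omega_lim have "eventually (\<lambda>n. 2 * real k \<le> \<omega> n) sequentially"
    by (simp add: filterlim_at_top)
  then obtain M where M: "\<And>n. n \<ge> M \<Longrightarrow> 2 * real k \<le> \<omega> n"
    by (auto simp: eventually_sequentially)
  define C where "C = nat \<bar>S (N-1)\<bar>"
  define m where "m = M + 2 * (N + C) + 1"
  define n where "n = N - 1 + m * k"
  have nm: "n \<ge> m" unfolding n_def using k1
    by (metis le_add2 mult.right_neutral mult_le_mono2 order_trans)
  have n1: "n \<ge> 1" using nm unfolding m_def by simp
  have om: "\<omega> n \<ge> 2 * real k" using M nm unfolding m_def by simp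
  have kpos: "real k > 0" using k1 by simp
  have "real_of_int (S n) \<le> real n / \<omega> n" using disc[OF n1] unfolding S_def by linarith
  also have "\<dots> \<le> real n / (2 * real k)"
    using om kpos by (intro divide_left_mono) auto
  also have "\<dots> = real (N-1) / (2 * real k) + real m / 2"
    unfolding n_def using kpos by (simp add: field_simps)
  also have "real (N-1) / (2 * real k) \<le> real (N - 1)"
  proof -
    have "real (N-1) * 1 \<le> real (N-1) * (2 * real k)"
      using k1 by (intro mult_left_mono) auto
    then show ?thesis using kpos by (simp add: field_simps)
  qed
  finally have A: "real_of_int (S n) \<le> real (N-1) + real m / 2" by simp
  have B: "S n \<ge> S (N-1) + int m" unfolding n_def Seq using blk[of m] by simp
  have "S (N-1) \<ge> - int C" unfolding C_def by simp
  with A B have "real m / 2 \<le> real (N-1) + real C" by linarith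
  then show False unfolding m_def by simp
qed

theorem theorem2p8:
  fixes f :: "nat \<Rightarrow> int" and \<omega> :: "nat \<Rightarrow> real" and k :: nat
  assumes pm1: "\<And>n. n \<ge> 1 \<Longrightarrow> f n \<in> {-1, 1}"
    and omega_lim: "filterlim \<omega> at_top sequentially"
    and disc: "\<And>n. n \<ge> 1 \<Longrightarrow> \<bar>real_of_int (\<Sum>i\<in>{1..n}. f i)\<bar> \<le> real n / \<omega> n"
    and k_even: "even k" and k_ge: "k \<ge> 2"
  shows "infinite {a::nat. a \<ge> 1 \<and> (\<Sum>i\<in>{a..<a+k}. f i) = 0}"
proof
  define g where "g a = (\<Sum>i\<in>{a..<a+k}. f i)" for a
  assume fin: "finite {a::nat. a \<ge> 1 \<and> (\<Sum>i\<in>{a..<a+k}. f i) = 0}"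
  then obtain N0 where N0: "\<And>a. a \<in> {a::nat. a \<ge> 1 \<and> (\<Sum>i\<in>{a..<a+k}. f i) = 0} \<Longrightarrow> a \<le> N0"
    by (meson finite_nat_set_iff_bounded_le)
  define N where "N = N0 + 1"
  have N1: "N \<ge> 1" unfolding N_def by simp
  have nz: "g a \<noteq> 0" if "a \<ge> N" for a
    using N0[of a] that unfolding N_def g_def by force
  have ev: "even (g a)" if "a \<ge> 1" for a
  proof -
    have "even (g a) = even (card {a..<a+k})" unfolding g_def
    proof (rule parity_sum)
      fix x assume "x \<in> {a..<a+k}"
      then have "f x \<in> {-1,1}" using pm1 that by auto
      then show "odd (f x)" by auto
    qed simp
    then show ?thesis using k_even by simp
  qed
  have step: "g (Suc a) = g a + f (a+k) - f a" if "a \<ge> 1" for a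
  proof -
    have "g (Suc a) + f a = (\<Sum>i\<in>insert a {Suc a..<Suc a+k}. f i)" unfolding g_def by simp
    also have "insert a {Suc a..<Suc a+k} = insert (a+k) {a..<a+k}" by auto
    also have "(\<Sum>i\<in>insert (a+k) {a..<a+k}. f i) = f (a+k) + g a" unfolding g_def by simp
    finally show ?thesis by simp
  qed
  have diff: "g (Suc a) \<ge> g a - 2 \<and> g (Suc a) \<le> g a + 2" if "a \<ge> 1" for a
  proof -
    have "f (a+k) \<in> {-1,1}" "f a \<in> {-1,1}" using pm1 that by auto
    then show ?thesis using step[OF that] by auto
  qed
  have gpos: "g a > 0" if "g N > 0" "a \<ge> N" for a
    using that(2)
  proof (induction a rule: dec_induct)
    case base then show ?case using that by simp
  next
    case (step a)
    have "even (g a)" using ev step N1 by simp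
    with step.IH have "g a \<ge> 2" by presburger
    moreover have "g (Suc a) \<noteq> 0" using nz step by simp
    ultimately show ?case using diff[of a] step N1 by force
  qed
  have gneg: "g a < 0" if "g N < 0" "a \<ge> N" for a
    using that(2)
  proof (induction a rule: dec_induct)
    case base then show ?case using that by simp
  next
    case (step a)
    have "even (g a)" using ev step N1 by simp
    with step.IH have "g a \<le> -2" by presburger
    moreover have "g (Suc a) \<noteq> 0" using nz step by simp
    ultimately show ?case using diff[of a] step N1 by force
  qed
  show False
  proof (cases "g N > 0")
    case True
    show False
      by (rule pos_case[OF omega_lim disc _ N1, of k]) (use k_ge gpos[OF True] in \<open>auto simp: g_def int_one_le_iff_zero_less\<close>)
  next
    case False
    then have gn: "g N < 0" using nz[of N] by simp
    have disc': "\<bar>real_of_int (\<Sum>i\<in>{1..n}. - f i)\<bar> \<le> real n / \<omega> n" if "n \<ge> 1" for n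
      using disc[OF that] by (simp add: sum_negf)
    show False
      by (rule pos_case[OF omega_lim disc' _ N1, of k])
         (use k_ge gneg[OF gn] in \<open>auto simp: g_def sum_negf int_one_le_iff_zero_less\<close>)
  qed
qed

end
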